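(* For every $h\in R$, the binary representation of $h$ does not contain $10000$ as a contiguous substring.
   Context: Stern's sequence $(a(n))_{n\ge0}$: $a(0)=0$, $a(1)=1$, $a(2n)=a(n)$, $a(2n+1)=a(n)+a(n+1)$; $s(n)=a(n+1)$ for $n\ge0$. $R$ is the set of record-setters of $s$, i.e. indices $v\ge0$ with $s(i)<s(v)$ for all $i<v$. The binary representation of a positive integer has no leading zeros; $0$ is represented by the string $0$. *)

theory Defs
  imports Main "HOL-Library.Sublist"
begin

function stern :: "nat \<Rightarrow> nat" where
  "stern n = (if n = 0 then 0 else if n = 1 then 1
     else if even n then stern (n div 2)
     else stern (n div 2) + stern (n div 2 + 1))"
  by auto
termination
  by (relation "measure id") (auto elim!: oddE)

definition s :: "nat \<Rightarrow> nat" where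
  "s n = stern (n + 1)"

definition R :: "nat set" where
  "R = {v. \<forall>i<v. s i < s v}"

fun bin_aux :: "nat \<Rightarrow> nat list" where
  "bin_aux n = (if n = 0 then [] else bin_aux (n div 2) @ [n mod 2])"

definition bin :: "nat \<Rightarrow> nat list" where
  "bin n = (if n = 0 then [0] else bin_aux n)"

end

theory Submission
  imports Defs
begin

declare stern.simps[simp del] bin_aux.simps[simp del]

lemma stern0: "stern 0 = 0"
  by (subst stern.simps) simp

lemma stern_even: "stern (2*n) = stern n"
  by (subst stern.simps) (auto simp: stern0)

lemma stern_odd: "stern (2*n+1) = stern n + stern (n+1)"
proof (cases "n = 0")
  case True then show ?thesis using stern0 by simp
next
  case False then show ?thesis by (subst stern.simps) auto
qed

lemma step1:
  assumes "stern M \<le> stern M'" "stern (M+1) \<le> stern (M'+1)" "b < 2"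
  shows "stern (2*M+b) \<le> stern (2*M'+b) \<and> stern (2*M+b+1) \<le> stern (2*M'+b+1)"
proof (cases "b = 0")
  case True
  have "stern (2*M+1) \<le> stern (2*M'+1)" using assms unfolding stern_odd by simp
  then show ?thesis using True assms by (simp add: stern_even)
next
  case False
  then have b: "b = 1" using assms by auto
  have o1: "stern (2*M+1) = stern M + stern (M+1)" "stern (2*M'+1) = stern M' + stern (M'+1)"
    using stern_odd by auto
  have o2: "stern (2*M+1+1) = stern (M+1)" "stern (2*M'+1+1) = stern (M'+1)"
    using stern_even[of "M+1"] stern_even[of "M'+1"] by (simp_all add: algebra_simps)
  show ?thesis unfolding b o1 o2 using assms by simp
qed

lemma monok:
  "\<And>M M' B. B < 2^k \<Longrightarrow> stern M \<le> stern M' \<Longrightarrow> stern (M+1) \<le> stern (M'+1) \<Longrightarrow>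
   stern (M*2^k+B) \<le> stern (M'*2^k+B) \<and> stern (M*2^k+B+1) \<le> stern (M'*2^k+B+1)"
proof (induction k)
  case 0 then show ?case by simp
next
  case (Suc k)
  define b where "b = B div 2^k"
  define C where "C = B mod 2^k"
  have b2: "b < 2" using Suc.prems(1) unfolding b_def
    by (simp add: less_mult_imp_div_less mult.commute)
  have C: "C < 2^k" unfolding C_def by simp
  have hB: "B = b*2^k + C" unfolding b_def C_def by (metis div_mult_mod_eq)
  have s: "stern (2*M+b) \<le> stern (2*M'+b) \<and> stern (2*M+b+1) \<le> stern (2*M'+b+1)"
    using step1[OF Suc.prems(2,3) b2] .
  have "stern ((2*M+b)*2^k+C) \<le> stern ((2*M'+b)*2^k+C) \<and> stern ((2*M+b)*2^k+C+1) \<le> stern ((2*M'+b)*2^k+C+1)"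
    using Suc.IH[OF C] s by blast
  moreover have "\<And>X. X*2^Suc k + B = (2*X+b)*2^k+C" unfolding hB by (simp add: algebra_simps)
  ultimately show ?case by metis
qed

definition val :: "nat list \<Rightarrow> nat" where
  "val xs = foldl (\<lambda>acc d. 2*acc+d) 0 xs"

lemma val_snoc: "val (xs @ [d]) = 2 * val xs + d"
  unfolding val_def by simp

lemma val_Nil: "val [] = 0"
  unfolding val_def by simp

lemma foldl_val: "foldl (\<lambda>acc d. 2*acc+d) a ys = a*2^length ys + val ys"
proof (induction ys rule: rev_induct)
  case Nil then show ?case by (simp add: val_Nil)
next
  case (snoc x xs)
  have "foldl (\<lambda>acc d. 2*acc+d) a (xs @ [x]) = 2 * foldl (\<lambda>acc d. 2*acc+d) a xs + x" by simp
  then show ?case unfolding snoc val_snoc by (simp add: algebra_simps)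
qed

lemma val_append: "val (xs @ ys) = val xs * 2^length ys + val ys"
proof -
  have "val (xs @ ys) = foldl (\<lambda>acc d. 2*acc+d) (val xs) ys" unfolding val_def by simp
  then show ?thesis by (simp only: foldl_val)
qed

lemma val_bin_aux: "val (bin_aux n) = n"
proof (induction n rule: bin_aux.induct)
  case (1 n)
  show ?case
  proof (cases "n = 0")
    case True then show ?thesis by (subst bin_aux.simps) (simp add: val_Nil)
  next
    case False
    then have "bin_aux n = bin_aux (n div 2) @ [n mod 2]" by (subst bin_aux.simps) simp
    then show ?thesis using 1 False by (simp add: val_snoc)
  qed
qed

lemma bin_aux_digits: "set (bin_aux n) \<subseteq> {0,1}"
proof (induction n rule: bin_aux.induct)
  case (1 n)
  show ?case
  proof (cases "n = 0")
    case True then show ?thesis by (subst bin_aux.simps) simp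
  next
    case False
    then have "bin_aux n = bin_aux (n div 2) @ [n mod 2]" by (subst bin_aux.simps) simp
    then show ?thesis using 1 False by auto
  qed
qed

lemma val_bound: "set ys \<subseteq> {0,1} \<Longrightarrow> val ys < 2^length ys"
proof (induction ys rule: rev_induct)
  case Nil then show ?case by (simp add: val_Nil)
next
  case (snoc x xs)
  then have "val xs < 2^length xs" "x \<le> 1" by auto
  then show ?case by (simp add: val_snoc)
qed

lemma ev2: "m = 2*n \<Longrightarrow> stern n = p \<Longrightarrow> stern m = p"
  using stern_even by simp

lemma od2: "m = 2*n+1 \<Longrightarrow> n' = n+1 \<Longrightarrow> stern n = p \<Longrightarrow> stern n' = q \<Longrightarrow> stern m = p+q"
  using stern_odd by simp

lemma key:
  "stern (32*A+12) \<ge> stern (32*A+16) \<and> stern (32*A+13) \<ge> stern (32*A+17)"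
proof -
  define x where "x = stern A"
  define y where "y = stern (A+1)"
  have a1: "stern (2*A+1) = x+y" unfolding x_def y_def by (rule od2) simp_all
  have a2: "stern (2*A+2) = y" unfolding y_def by (rule ev2) simp_all
  have a0: "stern (2*A) = x" unfolding x_def by (rule ev2) simp_all
  have c42: "stern (4*A+2) = x+y" by (rule ev2[OF _ a1]) simp
  have c84: "stern (8*A+4) = x+y" by (rule ev2[OF _ c42]) simp
  have c168: "stern (16*A+8) = x+y" by (rule ev2[OF _ c84]) simp
  have b16: "stern (32*A+16) = x+y" by (rule ev2[OF _ c168]) simp
  have "stern (4*A+3) = (x+y)+y" by (rule od2[OF _ _ a1 a2]) simp_all
  then have c43: "stern (4*A+3) = x+2*y" by simp
  have "stern (8*A+5) = (x+y)+(x+2*y)" by (rule od2[OF _ _ c42 c43]) simp_all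
  then have c85: "stern (8*A+5) = 2*x+3*y" by simp
  have "stern (16*A+9) = (x+y)+(2*x+3*y)" by (rule od2[OF _ _ c84 c85]) simp_all
  then have c169: "stern (16*A+9) = 3*x+4*y" by simp
  have "stern (32*A+17) = (x+y)+(3*x+4*y)" by (rule od2[OF _ _ c168 c169]) simp_all
  then have b17: "stern (32*A+17) = 4*x+5*y" by simp
  have "stern (4*A+1) = x+(x+y)" by (rule od2[OF _ _ a0 a1]) simp_all
  then have c41: "stern (4*A+1) = 2*x+y" by simp
  have "stern (8*A+3) = (2*x+y)+(x+y)" by (rule od2[OF _ _ c41 c42]) simp_all
  then have c83: "stern (8*A+3) = 3*x+2*y" by simp
  have c166: "stern (16*A+6) = 3*x+2*y" by (rule ev2[OF _ c83]) simp
  have "stern (16*A+7) = (3*x+2*y)+(x+y)" by (rule od2[OF _ _ c83 c84]) simp_all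
  then have c167: "stern (16*A+7) = 4*x+3*y" by simp
  have b12: "stern (32*A+12) = 3*x+2*y" by (rule ev2[OF _ c166]) simp
  have "stern (32*A+13) = (3*x+2*y)+(4*x+3*y)" by (rule od2[OF _ _ c166 c167]) simp_all
  then have b13: "stern (32*A+13) = 7*x+5*y" by simp
  show ?thesis using b16 b17 b12 b13 by simp
qed

theorem mainTheorem7:
  shows "\<forall>h\<in>R. \<not> sublist [1, 0, 0, 0, 0] (bin h)"
proof (intro ballI notI)
  fix h assume hR: "h \<in> R" and sub: "sublist [1, 0, 0, 0, 0] (bin h)"
  obtain xs ys where e: "bin h = xs @ [1,0,0,0,0] @ ys" using sub unfolding sublist_def by blast
  have "length (bin h) \<ge> 5" using e by simp
  then have "h \<noteq> 0" by (cases "h = 0") (auto simp: bin_def)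
  then have e2: "bin_aux h = xs @ [1,0,0,0,0] @ ys" using e by (simp add: bin_def)
  have dig: "set ys \<subseteq> {0,1}" using bin_aux_digits[of h] unfolding e2 by auto
  define A where "A = val xs"
  define k where "k = length ys"
  define B where "B = val ys"
  have Bk: "B < 2^k" unfolding B_def k_def using val_bound[OF dig] .
  have v16: "val [1,0,0,0,0] = 16" by (simp add: val_def)
  have v2: "val ([1,0,0,0,0] @ ys) = 16*2^length ys + val ys"
    using val_append[of "[1,0,0,0,0]" ys] v16 by simp
  have "h = val (bin_aux h)" by (simp add: val_bin_aux)
  also have "\<dots> = val xs * 2^length ([1,0,0,0,0] @ ys) + (16*2^length ys + val ys)"
    unfolding e2 val_append[of xs] v2 ..
  also have "\<dots> = (32*A+16)*2^k + B" unfolding A_def k_def B_def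
    by (simp add: algebra_simps power_add)
  finally have hh: "h = (32*A+16)*2^k + B" .
  define i where "i = (32*A+12)*2^k + B"
  have "i < h" unfolding hh i_def by simp
  have "stern ((32*A+12)*2^k+B+1) \<ge> stern ((32*A+16)*2^k+B+1)"
    using monok[OF Bk, of "32*A+16" "32*A+12"] key[of A] by (simp add: algebra_simps)
  then have "s i \<ge> s h" unfolding s_def i_def hh by simp
  moreover have "s i < s h" using hR \<open>i < h\<close> unfolding R_def by auto
  ultimately show False by simp
qed

end
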